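(* Let $G$ be a compactly generated, totally disconnected, locally compact group, let $\Gamma$ be a Cayley–Abels graph for $G$ of degree $d$, let $K$ be the kernel of the action of $G$ on $\Gamma$, and let $L\le S_d$ be the local action of $G$ on $\Gamma$. If $A$ belongs to the local simple content of $G/K$, then $A$ is a subquotient of a point stabilizer of $L$: there exist $i\in\{1,\dots,d\}$ and subgroups $N\trianglelefteq H\le L_i$ with $H/N\cong A$, where $L_i$ is the stabilizer of $i$ in $L$. In particular $A$ is isomorphic to a subquotient of $S_{d-1}$.
   Context: A Cayley–Abels graph for a totally disconnected, locally compact group $G$ is a connected, locally finite simple graph $\Gamma$ with an action of $G$ by automorphisms (not necessarily faithful) that is vertex-transitive with compact open vertex stabilizers. The local action is the permutation group, viewed as a subgroup of $S_d$ up to conjugacy, induced by a vertex stabilizer $G_\alpha$ on the neighbourhood $\Gamma(\alpha)$. A subquotient of a group is a quotient of one of its subgroups. For a second countable profinite group, a composition series is a countable descending chain of closed subgroups, each normal in the previous, with trivial intersection and simple (finite) successive quotients; its composition factors are independent of the series. The local simple content of a second countable, totally disconnected, locally compact group is the set of isomorphism classes of finite simple groups that are composition factors of every compact open subgroup. *)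

theory Defs
  imports "HOL-Analysis.Analysis" "HOL-Algebra.Algebra"
begin

definition topological_group :: "('a, 'b) monoid_scheme \<Rightarrow> 'a topology \<Rightarrow> bool" where
  "topological_group G T \<longleftrightarrow> group G \<and> topspace T = carrier G \<and>
     continuous_map (prod_topology T T) T (\<lambda>(x, y). mult G x y) \<and>
     continuous_map T T (\<lambda>x. m_inv G x)"

definition totally_disconnected_space :: "'a topology \<Rightarrow> bool" where
  "totally_disconnected_space T \<longleftrightarrow>
     (\<forall>x \<in> topspace T. connected_component_of_set T x = {x})"

definition tdlc_group :: "('a, 'b) monoid_scheme \<Rightarrow> 'a topology \<Rightarrow> bool" where
  "tdlc_group G T \<longleftrightarrow> topological_group G T \<and> Hausdorff_space T \<and>
     locally_compact_space T \<and> totally_disconnected_space T"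

definition compactly_generated :: "('a, 'b) monoid_scheme \<Rightarrow> 'a topology \<Rightarrow> bool" where
  "compactly_generated G T \<longleftrightarrow> (\<exists>C. compactin T C \<and> generate G C = carrier G)"

definition quot_topology :: "('a, 'b) monoid_scheme \<Rightarrow> 'a topology \<Rightarrow> 'a set \<Rightarrow> 'a set topology" where
  "quot_topology G T K = topology (\<lambda>S. S \<subseteq> RCOSETS G K \<and> openin T (\<Union>S))"

text \<open>A composition series of the closed subgroup U of the topological group (G,T):
  a descending chain of closed subgroups indexed by nat, starting at U, each normal in the
  previous one, with trivial intersection, and each successive quotient either trivial
  (repetition, which allows finite chains) or finite simple.\<close>
definition composition_series ::
  "('a, 'b) monoid_scheme \<Rightarrow> 'a topology \<Rightarrow> 'a set \<Rightarrow> (nat \<Rightarrow> 'a set) \<Rightarrow> bool" where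
  "composition_series G T U S \<longleftrightarrow> S 0 = U \<and>
     (\<forall>n. closedin T (S n) \<and> S (Suc n) \<lhd> G\<lparr>carrier := S n\<rparr> \<and>
          (S (Suc n) = S n \<or>
           (finite (carrier (G\<lparr>carrier := S n\<rparr> Mod S (Suc n))) \<and>
            simple_group (G\<lparr>carrier := S n\<rparr> Mod S (Suc n))))) \<and>
     (\<Inter>n. S n) = {one G}"

definition composition_factor ::
  "('a, 'b) monoid_scheme \<Rightarrow> 'a topology \<Rightarrow> 'a set \<Rightarrow> ('c, 'd) monoid_scheme \<Rightarrow> bool" where
  "composition_factor G T U A \<longleftrightarrow>
     (\<exists>S n. composition_series G T U S \<and> S (Suc n) \<noteq> S n \<and>
            (G\<lparr>carrier := S n\<rparr> Mod S (Suc n)) \<cong> A)"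

definition in_local_simple_content ::
  "('a, 'b) monoid_scheme \<Rightarrow> 'a topology \<Rightarrow> ('c, 'd) monoid_scheme \<Rightarrow> bool" where
  "in_local_simple_content G T A \<longleftrightarrow> group A \<and> finite (carrier A) \<and> simple_group A \<and>
     (\<forall>U. subgroup U G \<and> compactin T U \<and> openin T U \<longrightarrow> composition_factor G T U A)"

definition nbhd :: "('v \<Rightarrow> 'v \<Rightarrow> bool) \<Rightarrow> 'v \<Rightarrow> 'v set" where
  "nbhd E v = {w. E v w}"

definition cayley_abels_graph ::
  "('a, 'b) monoid_scheme \<Rightarrow> 'a topology \<Rightarrow> 'v set \<Rightarrow> ('v \<Rightarrow> 'v \<Rightarrow> bool) \<Rightarrow> ('a \<Rightarrow> 'v \<Rightarrow> 'v) \<Rightarrow> bool"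
  where
  "cayley_abels_graph G T V E act \<longleftrightarrow>
     V \<noteq> {} \<and>
     (\<forall>u w. E u w \<longrightarrow> u \<in> V \<and> w \<in> V) \<and>
     (\<forall>u w. E u w \<longrightarrow> E w u) \<and> (\<forall>u. \<not> E u u) \<and>
     (\<forall>u \<in> V. \<forall>w \<in> V. (u, w) \<in> {(x, y). E x y}\<^sup>*) \<and>
     (\<forall>v \<in> V. finite (nbhd E v)) \<and>
     group_action G V act \<and>
     (\<forall>g \<in> carrier G. \<forall>u \<in> V. \<forall>w \<in> V. E (act g u) (act g w) \<longleftrightarrow> E u w) \<and>
     (\<forall>u \<in> V. \<forall>w \<in> V. \<exists>g \<in> carrier G. act g u = w) \<and>
     (\<forall>v \<in> V. compactin T (stabilizer G act v) \<and> openin T (stabilizer G act v))"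

definition action_kernel :: "('a, 'b) monoid_scheme \<Rightarrow> 'v set \<Rightarrow> ('a \<Rightarrow> 'v \<Rightarrow> 'v) \<Rightarrow> 'a set" where
  "action_kernel G V act = {g \<in> carrier G. \<forall>v \<in> V. act g v = v}"

text \<open>The local action at the vertex alpha, transported to a subgroup of S_d = sym_group d
  via a bijection beta from the neighbourhood of alpha onto {1..d}.  (Different choices of
  alpha and beta give conjugate subgroups.)\<close>
definition local_action ::
  "('a, 'b) monoid_scheme \<Rightarrow> ('v \<Rightarrow> 'v \<Rightarrow> bool) \<Rightarrow> ('a \<Rightarrow> 'v \<Rightarrow> 'v) \<Rightarrow> 'v \<Rightarrow> ('v \<Rightarrow> nat) \<Rightarrow> nat
     \<Rightarrow> (nat \<Rightarrow> nat) set" where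
  "local_action G E act \<alpha> \<beta> d =
     {(\<lambda>i. if i \<in> {1..d} then \<beta> (act g (inv_into (nbhd E \<alpha>) \<beta> i)) else i) | g.
        g \<in> stabilizer G act \<alpha>}"

definition point_stabilizer :: "(nat \<Rightarrow> nat) set \<Rightarrow> nat \<Rightarrow> (nat \<Rightarrow> nat) set" where
  "point_stabilizer L i = {\<sigma> \<in> L. \<sigma> i = i}"

end

theory Submission
  imports Defs
begin

lemma lmul_cont:
  assumes "topological_group G T" "c \<in> carrier G"
  shows "continuous_map T T (\<lambda>g. c \<otimes>\<^bsub>G\<^esub> g)"
proof -
  have tg: "topspace T = carrier G"
   and m: "continuous_map (prod_topology T T) T (\<lambda>(x, y). x \<otimes>\<^bsub>G\<^esub> y)"
    using assms(1) unfolding topological_group_def by auto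
  have "continuous_map T (prod_topology T T) (\<lambda>g. (c, g))"
    by (intro continuous_map_pairedI continuous_map_const[THEN iffD2] continuous_map_id) (use assms tg in auto)
  from continuous_map_compose[OF this m] show ?thesis by (simp add: o_def)
qed

lemma translate_closed:
  assumes "topological_group G T" "c \<in> carrier G" "closedin T C" 
  shows "closedin T {g \<in> carrier G. inv\<^bsub>G\<^esub> c \<otimes>\<^bsub>G\<^esub> g \<in> C}"
proof -
  have gr: "group G" and tg: "topspace T = carrier G" using assms(1) unfolding topological_group_def by auto
  have "inv\<^bsub>G\<^esub> c \<in> carrier G" using gr assms(2) by simp
  from closedin_continuous_map_preimage[OF lmul_cont[OF assms(1) this] assms(3)]
  show ?thesis by (simp add: tg)
qed

lemma translate_open:
  assumes "topological_group G T" "c \<in> carrier G" "openin T C" 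
  shows "openin T {g \<in> carrier G. inv\<^bsub>G\<^esub> c \<otimes>\<^bsub>G\<^esub> g \<in> C}"
proof -
  have gr: "group G" and tg: "topspace T = carrier G" using assms(1) unfolding topological_group_def by auto
  have "inv\<^bsub>G\<^esub> c \<in> carrier G" using gr assms(2) by simp
  from openin_continuous_map_preimage[OF lmul_cont[OF assms(1) this] assms(3)]
  show ?thesis by (simp add: tg)
qed

lemma act_fibre_open:
  assumes "topological_group G T" "group_action G V act" "v \<in> V"
    "openin T (stabilizer G act v)"
  shows "openin T {g \<in> carrier G. act g v = w}"
proof (cases "\<exists>g0 \<in> carrier G. act g0 v = w")
  case False
  have e: "{g \<in> carrier G. act g v = w} = {}" using False by auto
  show ?thesis unfolding e by simp
next
  case True
  then obtain g0 where g0: "g0 \<in> carrier G" "act g0 v = w" by auto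
  have gr: "group G" using assms(1) unfolding topological_group_def by auto
  interpret group_action G V act by fact
  interpret grp: group G by (rule gr)
  have "{g \<in> carrier G. act g v = w} = {g \<in> carrier G. inv\<^bsub>G\<^esub> g0 \<otimes>\<^bsub>G\<^esub> g \<in> stabilizer G act v}"
  proof (intro Collect_cong conj_cong refl)
    fix g assume g: "g \<in> carrier G"
    have ig: "inv\<^bsub>G\<^esub> g0 \<in> carrier G" using gr g0 by simp
    have "act (inv\<^bsub>G\<^esub> g0 \<otimes>\<^bsub>G\<^esub> g) v = act (inv\<^bsub>G\<^esub> g0) (act g v)"
      using composition_rule[OF assms(3) ig g] .
    moreover have "act g0 (act (inv\<^bsub>G\<^esub> g0) x) = x" if "x \<in> V" for x
      using composition_rule[OF that g0(1) ig] id_eq_one gr g0(1) that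
      by (metis grp.r_inv restrict_apply')
    moreover have "act (inv\<^bsub>G\<^esub> g0) (act g0 x) = x" if "x \<in> V" for x
      using composition_rule[OF that ig g0(1)] id_eq_one gr g0(1) that
      by (metis grp.l_inv restrict_apply')
    moreover have "act g v \<in> V" using element_image[OF g assms(3) refl] .
    ultimately show "act g v = w \<longleftrightarrow> inv\<^bsub>G\<^esub> g0 \<otimes>\<^bsub>G\<^esub> g \<in> stabilizer G act v"
      unfolding stabilizer_def using g ig gr g0 assms(3) by auto metis
  qed
  then show ?thesis using translate_open[OF assms(1) g0(1) assms(4)] by simp
qed

lemma Union_rcosets_eq:
  assumes "group G" "subgroup K G" "S \<subseteq> rcosets\<^bsub>G\<^esub> K"
  shows "\<Union>S = {g \<in> carrier G. K #>\<^bsub>G\<^esub> g \<in> S}"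
proof -
  interpret group G by fact
  have 1: "x \<in> {g \<in> carrier G. K #>\<^bsub>G\<^esub> g \<in> S}" if xS: "x \<in> \<Union>S" for x
  proof -
    obtain c where c: "c \<in> S" "x \<in> c" using xS by auto
    then obtain y where y: "y \<in> carrier G" "c = K #>\<^bsub>G\<^esub> y" using assms(3) unfolding RCOSETS_def by auto
    have x: "x \<in> carrier G" using c y assms(2) by (meson subgroup.elemrcos_carrier assms(1))
    have "K #>\<^bsub>G\<^esub> y = K #>\<^bsub>G\<^esub> x" using repr_independence[OF _ y(1) assms(2)] c y by simp
    then show ?thesis using c y x by auto
  qed
  have 2: "x \<in> \<Union>S" if "x \<in> {g \<in> carrier G. K #>\<^bsub>G\<^esub> g \<in> S}" for x
    using that rcos_self[OF _ assms(2)] by auto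
  show ?thesis using 1 2 by blast
qed

lemma quot_istopology:
  assumes "group G" "subgroup K G"
  shows "istopology (\<lambda>S. S \<subseteq> rcosets\<^bsub>G\<^esub> K \<and> openin T (\<Union>S))"
proof -
  have i: "S \<inter> S' \<subseteq> rcosets\<^bsub>G\<^esub> K \<and> openin T (\<Union>(S \<inter> S'))"
    if a: "S \<subseteq> rcosets\<^bsub>G\<^esub> K \<and> openin T (\<Union>S)" "S' \<subseteq> rcosets\<^bsub>G\<^esub> K \<and> openin T (\<Union>S')" for S S'
  proof -
    have "\<Union>(S \<inter> S') = \<Union>S \<inter> \<Union>S'"
      using Union_rcosets_eq[OF assms, of S] Union_rcosets_eq[OF assms, of S'] Union_rcosets_eq[OF assms, of "S \<inter> S'"] a
      by auto
    then show ?thesis using a by auto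
  qed
  have u: "\<Union>\<K> \<subseteq> rcosets\<^bsub>G\<^esub> K \<and> openin T (\<Union>(\<Union>\<K>))"
    if a: "\<forall>C\<in>\<K>. C \<subseteq> rcosets\<^bsub>G\<^esub> K \<and> openin T (\<Union>C)" for \<K>
  proof -
    have "\<Union>(\<Union>\<K>) = \<Union>((\<lambda>S. \<Union>S) ` \<K>)" by auto
    then show ?thesis using a by auto
  qed
  show ?thesis unfolding istopology_def using i u by blast
qed

lemma openin_quot:
  assumes "group G" "subgroup K G"
  shows "openin (quot_topology G T K) S \<longleftrightarrow> S \<subseteq> rcosets\<^bsub>G\<^esub> K \<and> openin T (\<Union>S)"
  unfolding quot_topology_def using quot_istopology[OF assms, of T] by simp

lemma Union_rcosets_all:
  assumes "group G" "subgroup K G"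
  shows "\<Union>(rcosets\<^bsub>G\<^esub> K) = carrier G"
  using Union_rcosets_eq[OF assms order_refl] group.rcos_self[OF assms(1) _ assms(2)] unfolding RCOSETS_def by auto

lemma topspace_quot:
  assumes "group G" "subgroup K G" "topspace T = carrier G"
  shows "topspace (quot_topology G T K) = rcosets\<^bsub>G\<^esub> K"
proof -
  have "openin (quot_topology G T K) (rcosets\<^bsub>G\<^esub> K)"
    using openin_quot[OF assms(1,2)] Union_rcosets_all[OF assms(1,2)] assms(3)
    by (metis openin_topspace order_refl)
  then have "rcosets\<^bsub>G\<^esub> K \<subseteq> topspace (quot_topology G T K)" by (rule openin_subset)
  moreover have "topspace (quot_topology G T K) \<subseteq> rcosets\<^bsub>G\<^esub> K"
    using openin_quot[OF assms(1,2)] openin_topspace by blast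
  ultimately show ?thesis by auto
qed

lemma closedin_quot_Union:
  assumes "group G" "subgroup K G" "topspace T = carrier G"
    and "closedin (quot_topology G T K) C"
  shows "closedin T (\<Union>C)"
proof -
  have C: "C \<subseteq> rcosets\<^bsub>G\<^esub> K" and o: "openin (quot_topology G T K) (rcosets\<^bsub>G\<^esub> K - C)"
    using assms(4) unfolding closedin_def topspace_quot[OF assms(1-3)] by auto
  have "openin T (\<Union>(rcosets\<^bsub>G\<^esub> K - C))" using o openin_quot[OF assms(1,2)] by auto
  moreover have "\<Union>(rcosets\<^bsub>G\<^esub> K - C) = carrier G - \<Union>C"
    using Union_rcosets_eq[OF assms(1,2) C] Union_rcosets_eq[OF assms(1,2), of "rcosets\<^bsub>G\<^esub> K - C"]
    unfolding RCOSETS_def by auto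
  moreover have "\<Union>C \<subseteq> carrier G" using Union_rcosets_eq[OF assms(1,2) C] by auto
  ultimately show ?thesis unfolding closedin_def assms(3) by auto
qed

lemma continuous_quot:
  assumes "group G" "subgroup K G" "topspace T = carrier G"
  shows "continuous_map T (quot_topology G T K) (\<lambda>g. K #>\<^bsub>G\<^esub> g)"
  unfolding continuous_map_def
proof (intro conjI allI impI)
  show "(\<lambda>g. K #>\<^bsub>G\<^esub> g) \<in> topspace T \<rightarrow> topspace (quot_topology G T K)"
    unfolding topspace_quot[OF assms] assms(3) RCOSETS_def by auto
next
  fix U assume "openin (quot_topology G T K) U"
  then have U: "U \<subseteq> rcosets\<^bsub>G\<^esub> K" "openin T (\<Union>U)" using openin_quot[OF assms(1,2)] by auto
  show "openin T {x \<in> topspace T. K #>\<^bsub>G\<^esub> x \<in> U}"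
    using U Union_rcosets_eq[OF assms(1,2) U(1)] assms(3) by simp
qed

lemma kernel_normal:
  assumes "group_action G V act"
  shows "action_kernel G V act \<lhd> G"
proof -
  interpret ga: group_action G V act by fact
  have gh: "group_hom G (BijGroup V) act" by (rule ga.group_hom)
  have gG: "group G" using gh unfolding group_hom_def by auto
  have "kernel G (BijGroup V) act = action_kernel G V act"
  proof -
    have "act g = \<one>\<^bsub>BijGroup V\<^esub> \<longleftrightarrow> (\<forall>v\<in>V. act g v = v)" if g: "g \<in> carrier G" for g
    proof -
      have one: "\<one>\<^bsub>BijGroup V\<^esub> = (\<lambda>x\<in>V. x)"
        using ga.id_eq_one group_hom.hom_one[OF gh] by simp
      have ext: "act g \<in> extensional V" using ga.bij_prop0[OF g] unfolding Bij_def by auto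
      show ?thesis unfolding one
      proof
        assume "act g = (\<lambda>x\<in>V. x)" then show "\<forall>v\<in>V. act g v = v" by simp
      next
        assume "\<forall>v\<in>V. act g v = v"
        then show "act g = (\<lambda>x\<in>V. x)" using ext by (intro extensionalityI[OF ext]) auto
      qed
    qed
    then show ?thesis unfolding kernel_def action_kernel_def by auto
  qed
  then show ?thesis using group_hom.normal_kernel[OF gh] by simp
qed

lemma stab_closed:
  assumes "topological_group G T" "group_action G V act" "u \<in> V"
    "\<forall>v\<in>V. openin T (stabilizer G act v)"
  shows "closedin T (stabilizer G act u)"
proof -
  interpret ga: group_action G V act by fact
  have tg: "topspace T = carrier G" using assms(1) unfolding topological_group_def by auto
  have "topspace T - stabilizer G act u = (\<Union>w\<in>V - {u}. {g \<in> carrier G. act g u = w})"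
    unfolding tg stabilizer_def using ga.element_image[OF _ assms(3) refl] by auto
  moreover have "openin T (\<Union>w\<in>V - {u}. {g \<in> carrier G. act g u = w})"
    using act_fibre_open[OF assms(1,2,3)] assms(3,4) by auto
  ultimately show ?thesis unfolding closedin_def tg stabilizer_def by auto
qed

lemma extract_PQ:
  assumes tg: "topological_group G T"
    and ga: "group_action G V act"
    and stab: "\<forall>v\<in>V. compactin T (stabilizer G act v) \<and> openin T (stabilizer G act v)"
    and al: "\<alpha> \<in> V" "u \<in> V"
    and lsc: "in_local_simple_content (G Mod action_kernel G V act)
               (quot_topology G T (action_kernel G V act)) A"
  shows "\<exists>P Q \<phi>. subgroup P G \<and> P \<subseteq> stabilizer G act \<alpha> \<inter> stabilizer G act u \<and>
           closedin T P \<and> closedin T Q \<and> action_kernel G V act \<subseteq> Q \<and> Q \<subseteq> P \<and>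
           \<phi> \<in> hom (G\<lparr>carrier := P\<rparr>) A \<and> \<phi> ` P = carrier A \<and>
           (\<forall>p\<in>P. \<phi> p = \<one>\<^bsub>A\<^esub> \<longleftrightarrow> p \<in> Q)"
proof -
  define K where "K = action_kernel G V act"
  have gG: "group G" and tsp: "topspace T = carrier G" using tg unfolding topological_group_def by auto
  interpret grp: group G by (rule gG)
  have KN: "K \<lhd> G" unfolding K_def by (rule kernel_normal[OF ga])
  interpret KN: normal K G by (rule KN)
  have KS: "subgroup K G" by (rule KN.subgroup_axioms)
  interpret ga: group_action G V act by (rule ga)
  define Gh where "Gh = G Mod K"
  have gGh: "group Gh" unfolding Gh_def by (rule KN.factorgroup_is_group)
  define T' where "T' = quot_topology G T K"
  define H0 where "H0 = stabilizer G act \<alpha> \<inter> stabilizer G act u"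
  have H0sub: "subgroup H0 G" unfolding H0_def
    using grp.subgroups_Inter_pair ga.stabilizer_subgroup al by blast
  have KH0: "K \<subseteq> H0" unfolding K_def H0_def action_kernel_def stabilizer_def using al by auto
  have H0cl: "closedin T H0" unfolding H0_def
    using stab_closed[OF tg ga] al stab by (intro closedin_Int) auto
  have H0cpt: "compactin T H0"
    using closed_compactin[OF _ _ H0cl, of "stabilizer G act \<alpha>"] stab al unfolding H0_def by auto
  have H0op: "openin T H0" unfolding H0_def using stab al by (intro openin_Int) auto
  have rhom: "(\<lambda>g. K #>\<^bsub>G\<^esub> g) \<in> hom G Gh" unfolding Gh_def by (rule KN.r_coset_hom_Mod)
  have rgh: "group_hom G Gh (\<lambda>g. K #>\<^bsub>G\<^esub> g)"
    using rhom gG gGh by (simp add: group_hom_def group_hom_axioms_def)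
  define U where "U = (\<lambda>g. K #>\<^bsub>G\<^esub> g) ` H0"
  have Usub: "subgroup U Gh" unfolding U_def
    by (rule group_hom.subgroup_img_is_subgroup[OF rgh H0sub])
  have Ucpt: "compactin T' U" unfolding U_def T'_def
    by (rule image_compactin[OF H0cpt continuous_quot[OF gG KS tsp]])
  have Urc: "U \<subseteq> rcosets\<^bsub>G\<^esub> K" unfolding U_def RCOSETS_def using H0sub subgroup.subset by blast
  have UnionU: "\<Union>U = H0"
  proof -
    have "g \<in> H0" if g: "g \<in> carrier G" "K #>\<^bsub>G\<^esub> g = K #>\<^bsub>G\<^esub> h" "h \<in> H0" for g h
    proof -
      have "g \<in> K #>\<^bsub>G\<^esub> h" using grp.rcos_self[OF g(1) KS] g(2) by simp
      then have "\<exists>k\<in>K. g = k \<otimes>\<^bsub>G\<^esub> h" unfolding r_coset_def by simp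
      then obtain k where k: "k \<in> K" "g = k \<otimes>\<^bsub>G\<^esub> h" by (elim bexE)
      have "k \<in> H0" using k(1) KH0 by (rule subsetD[rotated])
      then show ?thesis using k(2) g(3) subgroup.m_closed[OF H0sub] by simp
    qed
    note inH0 = this
    have e: "\<Union>U = {g \<in> carrier G. K #>\<^bsub>G\<^esub> g \<in> U}" by (rule Union_rcosets_eq[OF gG KS Urc])
    show ?thesis
    proof
      show "\<Union>U \<subseteq> H0"
      proof
        fix g assume "g \<in> \<Union>U"
        then have g: "g \<in> carrier G" "K #>\<^bsub>G\<^esub> g \<in> U" using e by auto
        then obtain h where "h \<in> H0" "K #>\<^bsub>G\<^esub> g = K #>\<^bsub>G\<^esub> h" unfolding U_def by auto
        then show "g \<in> H0" using inH0 g(1) by blast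
      qed
      show "H0 \<subseteq> \<Union>U"
      proof
        fix h assume h: "h \<in> H0"
        then have "h \<in> carrier G" using subgroup.subset[OF H0sub] by auto
        moreover have "K #>\<^bsub>G\<^esub> h \<in> U" using h unfolding U_def by auto
        ultimately show "h \<in> \<Union>U" using e by auto
      qed
    qed
  qed
  have Uop: "openin T' U" unfolding T'_def using openin_quot[OF gG KS] Urc UnionU H0op by simp
  have "composition_factor Gh T' U A" using lsc Usub Ucpt Uop
    unfolding in_local_simple_content_def K_def Gh_def T'_def by blast
  then obtain S n where ser: "composition_series Gh T' U S" and neq: "S (Suc n) \<noteq> S n"
    and isoA: "(Gh\<lparr>carrier := S n\<rparr> Mod S (Suc n)) \<cong> A"
    unfolding composition_factor_def by blast
  have gA: "group A" using lsc unfolding in_local_simple_content_def by auto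
  have S0: "S 0 = U" and Sstep: "\<And>m. closedin T' (S m) \<and> S (Suc m) \<lhd> Gh\<lparr>carrier := S m\<rparr>"
    using ser unfolding composition_series_def by auto
  have Ssub: "subgroup (S m) Gh \<and> S m \<subseteq> U" for m
  proof (induction m)
    case 0 then show ?case using S0 Usub by simp
  next
    case (Suc m)
    have "subgroup (S (Suc m)) (Gh\<lparr>carrier := S m\<rparr>)" using Sstep normal_imp_subgroup by blast
    then show ?case using group.incl_subgroup[OF gGh] Suc subgroup.subset by fastforce
  qed
  have Src: "S m \<subseteq> rcosets\<^bsub>G\<^esub> K" for m
    using Ssub[of m] subgroup.subset unfolding Gh_def FactGroup_def by fastforce
  define P where "P = \<Union>(S n)"
  define Q where "Q = \<Union>(S (Suc n))"
  have Pset: "P = {g \<in> carrier G. K #>\<^bsub>G\<^esub> g \<in> S n}"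
    unfolding P_def by (rule Union_rcosets_eq[OF gG KS Src])
  have Qset: "Q = {g \<in> carrier G. K #>\<^bsub>G\<^esub> g \<in> S (Suc n)}"
    unfolding Q_def by (rule Union_rcosets_eq[OF gG KS Src])
  have Psub: "subgroup P G"
  proof (rule grp.subgroupI)
    show "P \<subseteq> carrier G" using Pset by auto
    have "K #>\<^bsub>G\<^esub> \<one>\<^bsub>G\<^esub> \<in> S n"
      using group_hom.hom_one[OF rgh] Ssub[of n] subgroup.one_closed by fastforce
    then show "P \<noteq> {}" using Pset by auto
    show "inv\<^bsub>G\<^esub> a \<in> P" if "a \<in> P" for a
      using that Pset group_hom.hom_inv[OF rgh] Ssub[of n] subgroup.m_inv_closed by fastforce
    show "a \<otimes>\<^bsub>G\<^esub> b \<in> P" if "a \<in> P" "b \<in> P" for a b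
      using that Pset group_hom.hom_mult[OF rgh] Ssub[of n] subgroup.m_closed by fastforce
  qed
  have PH0: "P \<subseteq> H0" using Ssub[of n] UnionU unfolding P_def by auto
  have Pcl: "closedin T P" unfolding P_def
    using closedin_quot_Union[OF gG KS tsp] Sstep unfolding T'_def by blast
  have Qcl: "closedin T Q" unfolding Q_def
    using closedin_quot_Union[OF gG KS tsp] Sstep unfolding T'_def by blast
  have KQ: "K \<subseteq> Q"
  proof -
    have "\<one>\<^bsub>Gh\<^esub> \<in> S (Suc n)" using Ssub[of "Suc n"] subgroup.one_closed by blast
    then show ?thesis unfolding Q_def Gh_def by auto
  qed
  have QP: "Q \<subseteq> P" unfolding P_def Q_def using Sstep[of n] normal_imp_subgroup subgroup.subset by fastforce
  define Gn where "Gn = Gh\<lparr>carrier := S n\<rparr>"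
  define N where "N = S (Suc n)"
  have NN: "N \<lhd> Gn" unfolding N_def Gn_def using Sstep by blast
  interpret NN: normal N Gn by (rule NN)
  have gGn: "group Gn" by (rule NN.is_group)
  have gGnN: "group (Gn Mod N)" by (rule NN.factorgroup_is_group)
  obtain f where f: "f \<in> iso (Gn Mod N) A" using isoA unfolding is_iso_def Gn_def N_def by blast
  have fiso: "f \<in> hom (Gn Mod N) A \<and> f ` carrier (Gn Mod N) = carrier A \<and> inj_on f (carrier (Gn Mod N))"
    using f by (simp only: iso_iff)
  have fhom: "f \<in> hom (Gn Mod N) A" using fiso by (rule conjunct1)
  have fsurj: "f ` carrier (Gn Mod N) = carrier A" using fiso by (simp only:)
  have inj: "inj_on f (carrier (Gn Mod N))" using fiso by (simp only:)
  have piHom: "(\<lambda>a. N #>\<^bsub>Gn\<^esub> a) \<in> hom Gn (Gn Mod N)" by (rule NN.r_coset_hom_Mod)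
  have r'hom: "(\<lambda>g. K #>\<^bsub>G\<^esub> g) \<in> hom (G\<lparr>carrier := P\<rparr>) Gn"
    unfolding hom_def
  proof (intro CollectI conjI ballI)
    show "(\<lambda>g. K #>\<^bsub>G\<^esub> g) \<in> carrier (G\<lparr>carrier := P\<rparr>) \<rightarrow> carrier Gn"
      using Pset unfolding Gn_def by auto
    fix x y assume "x \<in> carrier (G\<lparr>carrier := P\<rparr>)" "y \<in> carrier (G\<lparr>carrier := P\<rparr>)"
    then have "x \<in> carrier G" "y \<in> carrier G" using Pset by auto
    then show "K #>\<^bsub>G\<^esub> (x \<otimes>\<^bsub>G\<lparr>carrier := P\<rparr>\<^esub> y) = (K #>\<^bsub>G\<^esub> x) \<otimes>\<^bsub>Gn\<^esub> (K #>\<^bsub>G\<^esub> y)"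
      using hom_mult[OF rhom] unfolding Gn_def by simp
  qed
  define \<phi> where "\<phi> = (\<lambda>p. f (N #>\<^bsub>Gn\<^esub> (K #>\<^bsub>G\<^esub> p)))"
  have phom: "\<phi> \<in> hom (G\<lparr>carrier := P\<rparr>) A"
    unfolding hom_def
  proof (intro CollectI conjI ballI)
    show "\<phi> \<in> carrier (G\<lparr>carrier := P\<rparr>) \<rightarrow> carrier A"
      unfolding \<phi>_def using hom_in_carrier[OF r'hom] hom_in_carrier[OF piHom] hom_in_carrier[OF fhom]
      by auto
    fix x y assume xy: "x \<in> carrier (G\<lparr>carrier := P\<rparr>)" "y \<in> carrier (G\<lparr>carrier := P\<rparr>)"
    show "\<phi> (x \<otimes>\<^bsub>G\<lparr>carrier := P\<rparr>\<^esub> y) = \<phi> x \<otimes>\<^bsub>A\<^esub> \<phi> y"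
      unfolding \<phi>_def
      using hom_mult[OF r'hom xy] hom_mult[OF piHom] hom_mult[OF fhom]
        hom_in_carrier[OF r'hom] hom_in_carrier[OF piHom] xy by simp
  qed
  have Sn_img: "S n = (\<lambda>g. K #>\<^bsub>G\<^esub> g) ` P"
  proof
    show "(\<lambda>g. K #>\<^bsub>G\<^esub> g) ` P \<subseteq> S n" using Pset by auto
    show "S n \<subseteq> (\<lambda>g. K #>\<^bsub>G\<^esub> g) ` P"
    proof
      fix x assume x: "x \<in> S n"
      then obtain g where g: "g \<in> carrier G" "x = K #>\<^bsub>G\<^esub> g" using Src[of n] unfolding RCOSETS_def by auto
      then show "x \<in> (\<lambda>g. K #>\<^bsub>G\<^esub> g) ` P" using x Pset by auto
    qed
  qed
  have psurj: "\<phi> ` P = carrier A"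
  proof -
    have "carrier (Gn Mod N) = (\<lambda>a. N #>\<^bsub>Gn\<^esub> a) ` S n"
      unfolding carrier_FactGroup Gn_def by simp
    then have "(\<lambda>p. N #>\<^bsub>Gn\<^esub> (K #>\<^bsub>G\<^esub> p)) ` P = carrier (Gn Mod N)"
      by (simp only: Sn_img image_image)
    then show ?thesis using fsurj unfolding \<phi>_def by (metis image_image)
  qed
  have pker: "\<phi> p = \<one>\<^bsub>A\<^esub> \<longleftrightarrow> p \<in> Q" if p: "p \<in> P" for p
  proof -
    have rp: "K #>\<^bsub>G\<^esub> p \<in> carrier Gn" using p Pset unfolding Gn_def by auto
    have pic: "N #>\<^bsub>Gn\<^esub> (K #>\<^bsub>G\<^esub> p) \<in> carrier (Gn Mod N)"
      using hom_in_carrier[OF piHom rp] .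
    have f1: "f \<one>\<^bsub>Gn Mod N\<^esub> = \<one>\<^bsub>A\<^esub>" using hom_one[OF fhom gGnN gA] .
    have one1: "\<one>\<^bsub>Gn Mod N\<^esub> \<in> carrier (Gn Mod N)" by (rule monoid.one_closed[OF group.is_monoid[OF gGnN]])
    have "\<phi> p = \<one>\<^bsub>A\<^esub> \<longleftrightarrow> N #>\<^bsub>Gn\<^esub> (K #>\<^bsub>G\<^esub> p) = N"
      unfolding \<phi>_def using inj_on_eq_iff[OF inj pic one1] f1 by simp
    also have "\<dots> \<longleftrightarrow> K #>\<^bsub>G\<^esub> p \<in> N"
    proof
      assume "N #>\<^bsub>Gn\<^esub> (K #>\<^bsub>G\<^esub> p) = N"
      then show "K #>\<^bsub>G\<^esub> p \<in> N" using group.rcos_self[OF gGn rp NN.subgroup_axioms] by simp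
    next
      assume "K #>\<^bsub>G\<^esub> p \<in> N"
      then show "N #>\<^bsub>Gn\<^esub> (K #>\<^bsub>G\<^esub> p) = N" using subgroup.rcos_const[OF NN.subgroup_axioms gGn] by simp
    qed
    also have "\<dots> \<longleftrightarrow> p \<in> Q" using Qset p Pset unfolding N_def by auto
    finally show ?thesis .
  qed
  have PH0': "P \<subseteq> stabilizer G act \<alpha> \<inter> stabilizer G act u" using PH0 unfolding H0_def .
  have KQ': "action_kernel G V act \<subseteq> Q" using KQ unfolding K_def .
  show ?thesis
    apply (rule exI[of _ P], rule exI[of _ Q], rule exI[of _ \<phi>])
    using Psub PH0' Pcl Qcl KQ' QP phom psurj pker by (intro conjI ballI) simp_all
qed

lemma finite_fix:
  assumes tg: "topological_group G T"
    and ga: "group_action G V act"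
    and stop: "\<forall>v\<in>V. openin T (stabilizer G act v)"
    and cpt: "compactin T C0" and PC0: "P \<subseteq> C0"
    and Psub: "subgroup P G" and Pcl: "closedin T P" and Qcl: "closedin T Q"
    and KQ: "action_kernel G V act \<subseteq> Q" and QP: "Q \<subseteq> P"
    and phom: "\<phi> \<in> hom (G\<lparr>carrier := P\<rparr>) A" and psurj: "\<phi> ` P = carrier A"
    and pker: "\<forall>p\<in>P. \<phi> p = \<one>\<^bsub>A\<^esub> \<longleftrightarrow> p \<in> Q"
    and gA: "group A" and fA: "finite (carrier A)"
  shows "\<exists>F. finite F \<and> F \<subseteq> V \<and> (\<forall>p\<in>P. (\<forall>v\<in>F. act p v = v) \<longrightarrow> p \<in> Q)"
proof -
  have gG: "group G" and tsp: "topspace T = carrier G" using tg unfolding topological_group_def by auto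
  interpret grp: group G by (rule gG)
  interpret ga: group_action G V act by (rule ga)
  interpret A: group A by (rule gA)
  have gP: "group (G\<lparr>carrier := P\<rparr>)" by (rule grp.subgroup_imp_group[OF Psub])
  have gh: "group_hom (G\<lparr>carrier := P\<rparr>) A \<phi>"
    unfolding group_hom_def group_hom_axioms_def using gP gA phom by blast
  have PG: "P \<subseteq> carrier G" using subgroup.subset[OF Psub] .
  define pa where "pa = (\<lambda>a. SOME p. p \<in> P \<and> \<phi> p = a)"
  have pa: "pa a \<in> P \<and> \<phi> (pa a) = a" if "a \<in> carrier A" for a
  proof -
    have "a \<in> \<phi> ` P" using that psurj by simp
    then have "\<exists>p. p \<in> P \<and> \<phi> p = a" by (elim imageE) auto
    then show ?thesis unfolding pa_def by (rule someI_ex)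
  qed
  define fib where "fib = (\<lambda>a. {g \<in> carrier G. inv\<^bsub>G\<^esub> (pa a) \<otimes>\<^bsub>G\<^esub> g \<in> Q})"
  have phi_mult: "\<phi> (x \<otimes>\<^bsub>G\<^esub> y) = \<phi> x \<otimes>\<^bsub>A\<^esub> \<phi> y" if "x \<in> P" "y \<in> P" for x y
    using group_hom.hom_mult[OF gh, of x y] that by simp
  have phi_inv: "\<phi> (inv\<^bsub>G\<^esub> x) = inv\<^bsub>A\<^esub> \<phi> x" if "x \<in> P" for x
    using group_hom.hom_inv[OF gh, of x] that grp.m_inv_consistent[OF Psub that] by simp
  have phiA: "\<phi> x \<in> carrier A" if "x \<in> P" for x using imageI[of x P \<phi>] psurj that by simp
  have PQ: "P - Q = (\<Union>a\<in>carrier A - {\<one>\<^bsub>A\<^esub>}. fib a)"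
  proof
    show "P - Q \<subseteq> (\<Union>a\<in>carrier A - {\<one>\<^bsub>A\<^esub>}. fib a)"
    proof
      fix p assume p: "p \<in> P - Q"
      define a where "a = \<phi> p"
      have aA: "a \<in> carrier A" "a \<noteq> \<one>\<^bsub>A\<^esub>" using p pker phiA unfolding a_def by auto
      have ip: "inv\<^bsub>G\<^esub> (pa a) \<in> P" using pa[OF aA(1)] subgroup.m_inv_closed[OF Psub] by blast
      have "inv\<^bsub>G\<^esub> (pa a) \<otimes>\<^bsub>G\<^esub> p \<in> P" using ip p subgroup.m_closed[OF Psub] by blast
      moreover have "\<phi> (inv\<^bsub>G\<^esub> (pa a) \<otimes>\<^bsub>G\<^esub> p) = \<one>\<^bsub>A\<^esub>"
        using phi_mult[OF ip, of p] phi_inv[of "pa a"] pa[OF aA(1)] p aA unfolding a_def by simp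
      ultimately have "inv\<^bsub>G\<^esub> (pa a) \<otimes>\<^bsub>G\<^esub> p \<in> Q" using pker by blast
      then have "p \<in> fib a" unfolding fib_def using p PG by blast
      then show "p \<in> (\<Union>a\<in>carrier A - {\<one>\<^bsub>A\<^esub>}. fib a)" using aA by blast
    qed
    show "(\<Union>a\<in>carrier A - {\<one>\<^bsub>A\<^esub>}. fib a) \<subseteq> P - Q"
    proof
      fix g assume "g \<in> (\<Union>a\<in>carrier A - {\<one>\<^bsub>A\<^esub>}. fib a)"
      then obtain a where a: "a \<in> carrier A" "a \<noteq> \<one>\<^bsub>A\<^esub>" "g \<in> fib a" by blast
      define y where "y = inv\<^bsub>G\<^esub> (pa a) \<otimes>\<^bsub>G\<^esub> g"
      have g: "g \<in> carrier G" and yQ: "y \<in> Q" using a(3) unfolding fib_def y_def by auto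
      have yP: "y \<in> P" using yQ QP by blast
      have paP: "pa a \<in> P" using pa[OF a(1)] by blast
      have paG: "pa a \<in> carrier G" using paP PG by blast
      have geq: "g = pa a \<otimes>\<^bsub>G\<^esub> y" unfolding y_def using paG g
        by (simp add: grp.m_assoc[symmetric])
      have gP: "g \<in> P" using geq paP yP subgroup.m_closed[OF Psub] by simp
      have y1: "\<phi> y = \<one>\<^bsub>A\<^esub>" using pker yP yQ by blast
      have "\<phi> g = a" using geq phi_mult[OF paP yP] y1 pa[OF a(1)] a(1) by simp
      then have "g \<notin> Q" using pker gP a(2) by blast
      then show "g \<in> P - Q" using gP by blast
    qed
  qed
  have fibcl: "closedin T (fib a)" if "a \<in> carrier A" for a
    unfolding fib_def using translate_closed[OF tg _ Qcl] pa[OF that] PG by blast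
  have PQcl: "closedin T (P - Q)" unfolding PQ
    using fibcl fA by (intro closedin_Union) auto
  have PQcpt: "compactin T (P - Q)" using closed_compactin[OF cpt _ PQcl] PC0 by blast
  define Ofib where "Ofib = (\<lambda>v w. {g \<in> carrier G. act g v = w})"
  define \<U> where "\<U> = {Ofib v w | v w. v \<in> V \<and> w \<in> V \<and> w \<noteq> v}"
  have Uop: "\<forall>B\<in>\<U>. openin T B"
    unfolding \<U>_def Ofib_def using act_fibre_open[OF tg ga] stop by auto
  have Ucov: "P - Q \<subseteq> \<Union>\<U>"
  proof
    fix p assume p: "p \<in> P - Q"
    then have pG: "p \<in> carrier G" using PG by blast
    have "p \<notin> action_kernel G V act" using p KQ by blast
    then obtain v where v: "v \<in> V" "act p v \<noteq> v" using pG unfolding action_kernel_def by blast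
    have "act p v \<in> V" using ga.element_image[OF pG v(1) refl] .
    then have "Ofib v (act p v) \<in> \<U>" unfolding \<U>_def using v by blast
    moreover have "p \<in> Ofib v (act p v)" unfolding Ofib_def using pG by simp
    ultimately show "p \<in> \<Union>\<U>" by blast
  qed
  obtain \<F> where F: "finite \<F>" "\<F> \<subseteq> \<U>" "P - Q \<subseteq> \<Union>\<F>"
    using PQcpt Uop Ucov unfolding compactin_def by metis
  have "\<forall>B\<in>\<F>. \<exists>v. v \<in> V \<and> (\<exists>w. w \<noteq> v \<and> B = Ofib v w)"
    using F(2) unfolding \<U>_def by blast
  then obtain fv where fv: "\<forall>B\<in>\<F>. fv B \<in> V \<and> (\<exists>w. w \<noteq> fv B \<and> B = Ofib (fv B) w)"
    by metis
  define F where "F = fv ` \<F>"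
  have "finite F" "F \<subseteq> V" unfolding F_def using F(1) fv by auto
  moreover have "p \<in> Q" if p: "p \<in> P" "\<forall>v\<in>F. act p v = v" for p
  proof (rule ccontr)
    assume "p \<notin> Q"
    then obtain B where B: "B \<in> \<F>" "p \<in> B" using F(3) p(1) by blast
    then obtain w where w: "w \<noteq> fv B" "B = Ofib (fv B) w" using fv by blast
    have "p \<in> Ofib (fv B) w" using B(2) w(2) by metis
    then have "act p (fv B) = w" unfolding Ofib_def by simp
    moreover have "act p (fv B) = fv B" using p(2) B(1) unfolding F_def by blast
    ultimately show False using w(1) by simp
  qed
  ultimately show ?thesis by blast
qed

lemma desc:
  assumes g1: "group G1" and gS: "group S" and gA: "group A"
    and fh: "f \<in> hom G1 S" and gh: "g \<in> hom G1 A" and gsurj: "g ` carrier G1 = carrier A"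
    and ker: "\<forall>x\<in>carrier G1. f x = \<one>\<^bsub>S\<^esub> \<longrightarrow> g x = \<one>\<^bsub>A\<^esub>"
  shows "subgroup (f ` carrier G1) S \<and>
         (\<exists>N. N \<lhd> S\<lparr>carrier := f ` carrier G1\<rparr> \<and> (S\<lparr>carrier := f ` carrier G1\<rparr> Mod N) \<cong> A)"
proof -
  interpret G1: group G1 by (rule g1)
  interpret S: group S by (rule gS)
  interpret A: group A by (rule gA)
  have fgh: "group_hom G1 S f" unfolding group_hom_def group_hom_axioms_def using g1 gS fh by blast
  have ggh: "group_hom G1 A g" unfolding group_hom_def group_hom_axioms_def using g1 gA gh by blast
  define H where "H = f ` carrier G1"
  have Hsub: "subgroup H S" unfolding H_def by (rule group_hom.img_is_subgroup[OF fgh])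
  have gH: "group (S\<lparr>carrier := H\<rparr>)" by (rule S.subgroup_imp_group[OF Hsub])
  have wd: "g x = g y" if xy: "x \<in> carrier G1" "y \<in> carrier G1" "f x = f y" for x y
  proof -
    have ix: "inv\<^bsub>G1\<^esub> x \<in> carrier G1" using xy by simp
    have "f (inv\<^bsub>G1\<^esub> x \<otimes>\<^bsub>G1\<^esub> y) = inv\<^bsub>S\<^esub> f x \<otimes>\<^bsub>S\<^esub> f y"
      using group_hom.hom_mult[OF fgh ix xy(2)] group_hom.hom_inv[OF fgh xy(1)] by simp
    also have "\<dots> = \<one>\<^bsub>S\<^esub>" using xy(3) hom_in_carrier[OF fh xy(2)] by simp
    finally have "g (inv\<^bsub>G1\<^esub> x \<otimes>\<^bsub>G1\<^esub> y) = \<one>\<^bsub>A\<^esub>" using ker ix xy by simp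
    then have "inv\<^bsub>A\<^esub> g x \<otimes>\<^bsub>A\<^esub> g y = \<one>\<^bsub>A\<^esub>"
      using group_hom.hom_mult[OF ggh ix xy(2)] group_hom.hom_inv[OF ggh xy(1)] by simp
    then show ?thesis using hom_in_carrier[OF gh xy(1)] hom_in_carrier[OF gh xy(2)]
      by (metis A.inv_closed A.inv_inv A.inv_comm A.inv_equality)
  qed
  define \<psi> where "\<psi> = (\<lambda>h. g (SOME x. x \<in> carrier G1 \<and> f x = h))"
  have psi: "\<psi> (f x) = g x" if x: "x \<in> carrier G1" for x
  proof -
    have "\<exists>y. y \<in> carrier G1 \<and> f y = f x" using x by blast
    then have "(SOME y. y \<in> carrier G1 \<and> f y = f x) \<in> carrier G1 \<and> f (SOME y. y \<in> carrier G1 \<and> f y = f x) = f x"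
      by (rule someI_ex)
    then show ?thesis unfolding \<psi>_def using wd x by blast
  qed
  have psihom: "\<psi> \<in> hom (S\<lparr>carrier := H\<rparr>) A"
    unfolding hom_def
  proof (intro CollectI conjI ballI)
    show "\<psi> \<in> carrier (S\<lparr>carrier := H\<rparr>) \<rightarrow> carrier A"
      unfolding H_def using psi hom_in_carrier[OF gh] by auto
    fix a b assume "a \<in> carrier (S\<lparr>carrier := H\<rparr>)" "b \<in> carrier (S\<lparr>carrier := H\<rparr>)"
    then obtain x y where x: "x \<in> carrier G1" "a = f x" and y: "y \<in> carrier G1" "b = f y"
      unfolding H_def by auto
    have "\<psi> (a \<otimes>\<^bsub>S\<lparr>carrier := H\<rparr>\<^esub> b) = \<psi> (f (x \<otimes>\<^bsub>G1\<^esub> y))"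
      using x y group_hom.hom_mult[OF fgh x(1) y(1)] by simp
    also have "\<dots> = g x \<otimes>\<^bsub>A\<^esub> g y" using psi[of "x \<otimes>\<^bsub>G1\<^esub> y"] x y group_hom.hom_mult[OF ggh x(1) y(1)] by simp
    finally show "\<psi> (a \<otimes>\<^bsub>S\<lparr>carrier := H\<rparr>\<^esub> b) = \<psi> a \<otimes>\<^bsub>A\<^esub> \<psi> b" using psi x y by simp
  qed
  have psisurj: "\<psi> ` carrier (S\<lparr>carrier := H\<rparr>) = carrier A"
  proof -
    have "\<psi> ` H = g ` carrier G1" unfolding H_def image_image using psi by (auto intro: image_eqI)
    then show ?thesis using gsurj by simp
  qed
  have pgh: "group_hom (S\<lparr>carrier := H\<rparr>) A \<psi>"
    unfolding group_hom_def group_hom_axioms_def using gH gA psihom by blast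
  show ?thesis
    using Hsub group_hom.normal_kernel[OF pgh] group_hom.FactGroup_iso[OF pgh psisurj]
    unfolding H_def by blast
qed

locale LA = group G + group_action G V act for G (structure) and V and act +
  fixes E :: "'v \<Rightarrow> 'v \<Rightarrow> bool" and \<alpha> :: 'v and \<beta> :: "'v \<Rightarrow> nat" and d :: nat
  assumes edges: "\<And>u w. E u w \<Longrightarrow> u \<in> V \<and> w \<in> V"
    and esym: "\<And>u w. E u w \<Longrightarrow> E w u"
    and pres: "\<And>g u w. g \<in> carrier G \<Longrightarrow> u \<in> V \<Longrightarrow> w \<in> V \<Longrightarrow> E (act g u) (act g w) \<longleftrightarrow> E u w"
    and alpha: "\<alpha> \<in> V"
    and bij: "bij_betw \<beta> (nbhd E \<alpha>) {1..d}"
begin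

lemma act_closed: "g \<in> carrier G \<Longrightarrow> x \<in> V \<Longrightarrow> act g x \<in> V"
  using element_image by blast

lemma act_one: "x \<in> V \<Longrightarrow> act \<one> x = x"
  using id_eq_one by (metis restrict_apply')

lemma act_mult: "g \<in> carrier G \<Longrightarrow> h \<in> carrier G \<Longrightarrow> x \<in> V \<Longrightarrow> act (g \<otimes> h) x = act g (act h x)"
  using composition_rule by blast

lemma act_inv_l: "g \<in> carrier G \<Longrightarrow> x \<in> V \<Longrightarrow> act (inv g) (act g x) = x"
  using act_mult[of "inv g" g x] act_one by simp

lemma act_inv_r: "g \<in> carrier G \<Longrightarrow> x \<in> V \<Longrightarrow> act g (act (inv g) x) = x"
  using act_mult[of g "inv g" x] act_one by simp

lemma act_inj: "g \<in> carrier G \<Longrightarrow> x \<in> V \<Longrightarrow> y \<in> V \<Longrightarrow> act g x = act g y \<Longrightarrow> x = y"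
  by (metis act_inv_l)

lemma nbhd_sub: "nbhd E v \<subseteq> V"
  unfolding nbhd_def using edges by blast

lemma nb_pres: "g \<in> carrier G \<Longrightarrow> v \<in> V \<Longrightarrow> x \<in> nbhd E v \<Longrightarrow> act g x \<in> nbhd E (act g v)"
  unfolding nbhd_def using pres edges by blast

lemma nb_pres_stab: "g \<in> stabilizer G act \<alpha> \<Longrightarrow> x \<in> nbhd E \<alpha> \<Longrightarrow> act g x \<in> nbhd E \<alpha>"
  using nb_pres[of g \<alpha> x] alpha unfolding stabilizer_def by auto

lemma binv_in: "i \<in> {1..d} \<Longrightarrow> inv_into (nbhd E \<alpha>) \<beta> i \<in> nbhd E \<alpha>"
  using bij_betw_inv_into[OF bij] bij_betwE by blast

lemma b_binv: "i \<in> {1..d} \<Longrightarrow> \<beta> (inv_into (nbhd E \<alpha>) \<beta> i) = i"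
  using bij_betw_inv_into_right[OF bij] by blast

lemma binv_b: "x \<in> nbhd E \<alpha> \<Longrightarrow> inv_into (nbhd E \<alpha>) \<beta> (\<beta> x) = x"
  using bij_betw_inv_into_left[OF bij] by blast

lemma b_in: "x \<in> nbhd E \<alpha> \<Longrightarrow> \<beta> x \<in> {1..d}"
  using bij bij_betwE by blast

lemma b_inj: "x \<in> nbhd E \<alpha> \<Longrightarrow> y \<in> nbhd E \<alpha> \<Longrightarrow> \<beta> x = \<beta> y \<Longrightarrow> x = y"
  using binv_b by metis

definition Lam :: "'a \<Rightarrow> nat \<Rightarrow> nat" where
  "Lam g = (\<lambda>i. if i \<in> {1..d} then \<beta> (act g (inv_into (nbhd E \<alpha>) \<beta> i)) else i)"

lemma stabG: "g \<in> stabilizer G act \<alpha> \<Longrightarrow> g \<in> carrier G"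
  unfolding stabilizer_def by auto

lemma Lam_mult:
  assumes g: "g \<in> stabilizer G act \<alpha>" and h: "h \<in> stabilizer G act \<alpha>"
  shows "Lam (g \<otimes> h) = Lam g \<circ> Lam h"
proof
  fix i show "Lam (g \<otimes> h) i = (Lam g \<circ> Lam h) i"
  proof (cases "i \<in> {1..d}")
    case True
    define x where "x = inv_into (nbhd E \<alpha>) \<beta> i"
    have x: "x \<in> nbhd E \<alpha>" unfolding x_def using binv_in[OF True] .
    have hx: "act h x \<in> nbhd E \<alpha>" using nb_pres_stab[OF h x] .
    have "Lam h i = \<beta> (act h x)" unfolding Lam_def x_def using True by simp
    moreover have "\<beta> (act h x) \<in> {1..d}" using b_in[OF hx] .
    ultimately have "(Lam g \<circ> Lam h) i = \<beta> (act g (act h x))"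
      unfolding Lam_def using binv_b[OF hx] by simp
    also have "\<dots> = \<beta> (act (g \<otimes> h) x)"
      using act_mult[OF stabG[OF g] stabG[OF h], of x] x nbhd_sub[of \<alpha>] by (simp add: subset_iff)
    also have "\<dots> = Lam (g \<otimes> h) i" unfolding Lam_def x_def using True by simp
    finally show ?thesis by simp
  next
    case False
    have "Lam k i = i" for k unfolding Lam_def using False by (simp only: if_False)
    then show ?thesis by simp
  qed
qed

lemma Lam_one: "Lam \<one> = id"
proof
  fix i show "Lam \<one> i = id i"
  proof (cases "i \<in> {1..d}")
    case True
    have "inv_into (nbhd E \<alpha>) \<beta> i \<in> V" using binv_in[OF True] nbhd_sub by blast
    then show ?thesis unfolding Lam_def using True act_one b_binv by simp
  next
    case False then show ?thesis unfolding Lam_def by (simp only: if_False id_apply)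
  qed
qed

lemma Lam_perm:
  assumes g: "g \<in> stabilizer G act \<alpha>"
  shows "Lam g permutes {1..d}"
proof -
  have sub: "subgroup (stabilizer G act \<alpha>) G" using stabilizer_subgroup[OF alpha] .
  have ig: "inv g \<in> stabilizer G act \<alpha>" using subgroup.m_inv_closed[OF sub g] .
  have gG: "g \<in> carrier G" using stabG[OF g] .
  have 1: "Lam g \<circ> Lam (inv g) = id" using Lam_mult[OF g ig] Lam_one gG by simp
  have 2: "Lam (inv g) \<circ> Lam g = id" using Lam_mult[OF ig g] Lam_one gG by simp
  show ?thesis unfolding permutes_def
  proof (intro conjI allI impI)
    fix x assume "x \<notin> {1..d}" then show "Lam g x = x" unfolding Lam_def by (simp only: if_False)
  next
    fix y show "\<exists>!x. Lam g x = y"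
    proof
      show "Lam g (Lam (inv g) y) = y" using 1 by (metis comp_apply id_apply)
    next
      fix x assume "Lam g x = y"
      then show "x = Lam (inv g) y" using 2 by (metis comp_apply id_apply)
    qed
  qed
qed

lemma Lam_hom: "Lam \<in> hom (G\<lparr>carrier := stabilizer G act \<alpha>\<rparr>) (sym_group d)"
  unfolding hom_def
proof (intro CollectI conjI ballI)
  show "Lam \<in> carrier (G\<lparr>carrier := stabilizer G act \<alpha>\<rparr>) \<rightarrow> carrier (sym_group d)"
    using Lam_perm by (auto simp: sym_group_carrier)
  fix x y assume "x \<in> carrier (G\<lparr>carrier := stabilizer G act \<alpha>\<rparr>)" "y \<in> carrier (G\<lparr>carrier := stabilizer G act \<alpha>\<rparr>)"
  then show "Lam (x \<otimes>\<^bsub>G\<lparr>carrier := stabilizer G act \<alpha>\<rparr>\<^esub> y) = Lam x \<otimes>\<^bsub>sym_group d\<^esub> Lam y"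
    using Lam_mult by (simp add: sym_group_mult)
qed

lemma Lam_in: "g \<in> stabilizer G act \<alpha> \<Longrightarrow> Lam g \<in> local_action G E act \<alpha> \<beta> d"
  unfolding local_action_def Lam_def by blast

lemma inv_cancel: "g \<in> carrier G \<Longrightarrow> z \<in> carrier G \<Longrightarrow> inv g \<otimes> (g \<otimes> z) = z"
  by (simp add: m_assoc[symmetric])

lemma conj_mult:
  assumes "g \<in> carrier G" "x \<in> carrier G" "y \<in> carrier G"
  shows "g \<otimes> (x \<otimes> y) \<otimes> inv g = (g \<otimes> x \<otimes> inv g) \<otimes> (g \<otimes> y \<otimes> inv g)"
  using assms by (simp add: m_assoc inv_cancel)

lemma act_conj:
  assumes "g \<in> carrier G" "x \<in> carrier G" "v \<in> V"
  shows "act (g \<otimes> x \<otimes> inv g) v = act g (act x (act (inv g) v))"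
  using assms act_mult act_closed by simp

lemma fix_subgroup:
  assumes P: "subgroup P G" and Y: "Y \<subseteq> V"
  shows "subgroup {g \<in> P. \<forall>y\<in>Y. act g y = y} G"
proof (rule subgroupI)
  show "{g \<in> P. \<forall>y\<in>Y. act g y = y} \<subseteq> carrier G" using subgroup.subset[OF P] by blast
  have "\<one> \<in> P" using subgroup.one_closed[OF P] .
  moreover have "\<forall>y\<in>Y. act \<one> y = y" using act_one Y by blast
  ultimately show "{g \<in> P. \<forall>y\<in>Y. act g y = y} \<noteq> {}" by blast
next
  fix a assume a: "a \<in> {g \<in> P. \<forall>y\<in>Y. act g y = y}"
  then have aG: "a \<in> carrier G" using subgroup.subset[OF P] by blast
  have "act (inv a) y = y" if "y \<in> Y" for y
    using act_inv_l[OF aG, of y] a that Y by auto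
  then show "inv a \<in> {g \<in> P. \<forall>y\<in>Y. act g y = y}" using a subgroup.m_inv_closed[OF P] by blast
next
  fix a b assume a: "a \<in> {g \<in> P. \<forall>y\<in>Y. act g y = y}" and b: "b \<in> {g \<in> P. \<forall>y\<in>Y. act g y = y}"
  then have aG: "a \<in> carrier G" and bG: "b \<in> carrier G" using subgroup.subset[OF P] by blast+
  have "act (a \<otimes> b) y = y" if "y \<in> Y" for y
    using act_mult[OF aG bG, of y] a b that Y by auto
  then show "a \<otimes> b \<in> {g \<in> P. \<forall>y\<in>Y. act g y = y}" using a b subgroup.m_closed[OF P] by blast
qed

end

inductive adm :: "('v \<Rightarrow> 'v \<Rightarrow> bool) \<Rightarrow> 'v \<Rightarrow> 'v \<Rightarrow> 'v set \<Rightarrow> bool" for E \<alpha> u where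
  adm_base: "adm E \<alpha> u {\<alpha>, u}"
| adm_step: "adm E \<alpha> u Y \<Longrightarrow> w \<in> Y \<Longrightarrow> adm E \<alpha> u (Y \<union> nbhd E w)"

lemma adm_alpha: "adm E \<alpha> u Y \<Longrightarrow> \<alpha> \<in> Y"
  by (induction rule: adm.induct) auto

lemma adm_reach:
  assumes "(\<alpha>, v) \<in> {(x, y). E x y}\<^sup>*" and "adm E \<alpha> u Y"
  shows "\<exists>Y'. adm E \<alpha> u Y' \<and> Y \<subseteq> Y' \<and> v \<in> Y'"
  using assms(1)
proof (induction rule: rtrancl_induct)
  case base
  have "adm E \<alpha> u Y \<and> Y \<subseteq> Y \<and> \<alpha> \<in> Y" using assms(2) adm_alpha[OF assms(2)] by simp
  then show ?case by (rule exI)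
next
  case (step x y)
  then obtain Y' where Y': "adm E \<alpha> u Y'" "Y \<subseteq> Y'" "x \<in> Y'" by blast
  have "adm E \<alpha> u (Y' \<union> nbhd E x)" using adm_step[OF Y'(1) Y'(3)] .
  moreover have "y \<in> Y' \<union> nbhd E x" using step(2) unfolding nbhd_def by simp
  ultimately show ?case using Y'(2) by blast
qed

lemma adm_cover:
  assumes "finite F" "\<forall>v\<in>F. (\<alpha>, v) \<in> {(x, y). E x y}\<^sup>*"
  shows "\<exists>Y. adm E \<alpha> u Y \<and> F \<subseteq> Y"
  using assms
proof (induction F rule: finite_induct)
  case empty then show ?case using adm_base[of E \<alpha> u] by blast
next
  case (insert v F)
  then obtain Y where Y: "adm E \<alpha> u Y" "F \<subseteq> Y" by blast
  have "(\<alpha>, v) \<in> {(x, y). E x y}\<^sup>*" using insert.prems by simp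
  from adm_reach[OF this Y(1)] obtain Y' where "adm E \<alpha> u Y'" "Y \<subseteq> Y'" "v \<in> Y'" by blast
  then show ?case using Y(2) by blast
qed

lemma adm_nb:
  assumes sym: "\<forall>x y. E x y \<longrightarrow> E y x" and u: "E \<alpha> u \<or> (u = \<alpha> \<and> nbhd E \<alpha> = {})"
    and "adm E \<alpha> u Y"
  shows "\<forall>y\<in>Y. (\<exists>z\<in>Y. E y z) \<or> nbhd E y = {}"
  using assms(3)
proof (induction rule: adm.induct)
  case adm_base
  show ?case using u sym by auto
next
  case (adm_step Y w)
  show ?case
  proof
    fix y assume "y \<in> Y \<union> nbhd E w"
    then show "(\<exists>z\<in>Y \<union> nbhd E w. E y z) \<or> nbhd E y = {}"
    proof
      assume "y \<in> Y" then show ?thesis using adm_step.IH by blast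
    next
      assume "y \<in> nbhd E w" then have "E y w" using sym unfolding nbhd_def by auto
      then show ?thesis using adm_step.hyps(2) by blast
    qed
  qed
qed

lemma adm_sub:
  assumes "\<forall>x y. E x y \<longrightarrow> x \<in> V \<and> y \<in> V" "\<alpha> \<in> V" "u \<in> V" "adm E \<alpha> u Y"
  shows "Y \<subseteq> V"
  using assms(4)
  by (induction rule: adm.induct) (use assms(1-3) in \<open>auto simp: nbhd_def\<close>)

lemma adm_descent:
  assumes "Good {\<alpha>, u}" "adm E \<alpha> u Y" "\<not> Good Y"
  shows "\<exists>Y0 w. adm E \<alpha> u Y0 \<and> w \<in> Y0 \<and> Good Y0 \<and> \<not> Good (Y0 \<union> nbhd E w)"
  using assms(2,3)
proof (induction rule: adm.induct)
  case adm_base then show ?case using assms(1) by blast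
next
  case (adm_step Y w)
  show ?case
  proof (cases "Good Y")
    case True then show ?thesis using adm_step by blast
  next
    case False then show ?thesis using adm_step.IH by blast
  qed
qed

lemma conj_perm:
  fixes p :: "nat \<Rightarrow> nat"
  assumes i0: "i0 \<in> {1..d}" and p: "p permutes {1..d}" and pi: "p i0 = i0"
  shows "(Transposition.transpose i0 d \<circ> p \<circ> Transposition.transpose i0 d) permutes {1..d-1}"
proof -
  define \<tau> where "\<tau> = Transposition.transpose i0 d"
  have dd: "d \<in> {1..d}" using i0 by auto
  have t: "\<tau> permutes {1..d}" unfolding \<tau>_def by (rule permutes_swap_id[OF i0 dd])
  have q: "\<tau> \<circ> p \<circ> \<tau> permutes {1..d}" using permutes_compose[OF permutes_compose[OF t p] t] by (simp add: o_assoc)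
  have "(\<tau> \<circ> p \<circ> \<tau>) d = d" unfolding \<tau>_def using pi by simp
  moreover have "{1..d} - {1..d-1} \<subseteq> {d}" by auto
  ultimately have "\<And>x. x \<in> {1..d} - {1..d-1} \<Longrightarrow> (\<tau> \<circ> p \<circ> \<tau>) x = x" by blast
  from permutes_superset[OF q this] show ?thesis unfolding \<tau>_def .
qed

theorem theorem5p5:
  fixes G :: "('a, 'b) monoid_scheme" and T :: "'a topology"
    and V :: "'v set" and E :: "'v \<Rightarrow> 'v \<Rightarrow> bool" and act :: "'a \<Rightarrow> 'v \<Rightarrow> 'v"
    and d :: nat and \<alpha> :: 'v and \<beta> :: "'v \<Rightarrow> nat"
    and A :: "('c, 'e) monoid_scheme"
  assumes "tdlc_group G T"
    and "compactly_generated G T"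
    and "cayley_abels_graph G T V E act"
    and "\<forall>v \<in> V. card (nbhd E v) = d"
    and "\<alpha> \<in> V"
    and "bij_betw \<beta> (nbhd E \<alpha>) {1..d}"
    and "in_local_simple_content (G Mod (action_kernel G V act))
           (quot_topology G T (action_kernel G V act)) A"
  shows "(\<exists>i \<in> {1..d}. \<exists>H N. subgroup H (sym_group d) \<and>
            H \<subseteq> point_stabilizer (local_action G E act \<alpha> \<beta> d) i \<and>
            N \<lhd> (sym_group d)\<lparr>carrier := H\<rparr> \<and>
            ((sym_group d)\<lparr>carrier := H\<rparr> Mod N) \<cong> A)
       \<and> (\<exists>H N. subgroup H (sym_group (d - 1)) \<and>
            N \<lhd> (sym_group (d - 1))\<lparr>carrier := H\<rparr> \<and>
            ((sym_group (d - 1))\<lparr>carrier := H\<rparr> Mod N) \<cong> A)"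
proof -
  have tg: "topological_group G T" using assms(1) unfolding tdlc_group_def by blast
  have gG: "group G" and tsp: "topspace T = carrier G" using tg unfolding topological_group_def by auto
  note cag = assms(3)[unfolded cayley_abels_graph_def]
  have edges: "\<And>u w. E u w \<Longrightarrow> u \<in> V \<and> w \<in> V" using cag by blast
  have esym: "\<And>u w. E u w \<Longrightarrow> E w u" using cag by blast
  have conn: "\<forall>u\<in>V. \<forall>w\<in>V. (u, w) \<in> {(x, y). E x y}\<^sup>*" using cag by blast
  have ga: "group_action G V act" using cag by blast
  have pres: "\<And>g u w. g \<in> carrier G \<Longrightarrow> u \<in> V \<Longrightarrow> w \<in> V \<Longrightarrow> E (act g u) (act g w) \<longleftrightarrow> E u w"
    using cag by blast
  have trans: "\<forall>u\<in>V. \<forall>w\<in>V. \<exists>g\<in>carrier G. act g u = w" using cag by blast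
  have stab: "\<forall>v\<in>V. compactin T (stabilizer G act v) \<and> openin T (stabilizer G act v)" using cag by blast
  have LA: "LA G V act E \<alpha> \<beta> d"
    unfolding LA_def LA_axioms_def using gG ga edges esym pres assms(5) assms(6) by blast
  interpret LA G V act E \<alpha> \<beta> d by (rule LA)
  have gA: "group A" and fA: "finite (carrier A)" and sA: "simple_group A"
    using assms(7) unfolding in_local_simple_content_def by auto
  interpret A: group A by (rule gA)
  define u where "u = (if nbhd E \<alpha> = {} then \<alpha> else (SOME x. x \<in> nbhd E \<alpha>))"
  have uprop: "E \<alpha> u \<or> (u = \<alpha> \<and> nbhd E \<alpha> = {})"
  proof (cases "nbhd E \<alpha> = {}")
    case True then show ?thesis unfolding u_def by simp
  next
    case False
    then have "(SOME x. x \<in> nbhd E \<alpha>) \<in> nbhd E \<alpha>" by (simp add: some_in_eq)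
    then show ?thesis unfolding u_def nbhd_def using False by simp
  qed
  have uV: "u \<in> V" using uprop edges assms(5) by blast
  obtain P Q \<phi> where Psub: "subgroup P G" and PH: "P \<subseteq> stabilizer G act \<alpha> \<inter> stabilizer G act u"
    and Pcl: "closedin T P" and Qcl: "closedin T Q" and KQ: "action_kernel G V act \<subseteq> Q" and QP: "Q \<subseteq> P"
    and phom: "\<phi> \<in> hom (G\<lparr>carrier := P\<rparr>) A" and psurj: "\<phi> ` P = carrier A"
    and pker: "\<forall>p\<in>P. \<phi> p = \<one>\<^bsub>A\<^esub> \<longleftrightarrow> p \<in> Q"
    using extract_PQ[OF tg ga stab assms(5) uV assms(7)] by blast
  have PG: "P \<subseteq> carrier G" using subgroup.subset[OF Psub] .
  have gP: "group (G\<lparr>carrier := P\<rparr>)" by (rule subgroup_imp_group[OF Psub])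
  have gh: "group_hom (G\<lparr>carrier := P\<rparr>) A \<phi>"
    unfolding group_hom_def group_hom_axioms_def using gP gA phom by blast
  have phi_mult: "\<phi> (x \<otimes>\<^bsub>G\<^esub> y) = \<phi> x \<otimes>\<^bsub>A\<^esub> \<phi> y" if "x \<in> P" "y \<in> P" for x y
    using group_hom.hom_mult[OF gh, of x y] that by simp
  have phi_inv: "\<phi> (inv\<^bsub>G\<^esub> x) = inv\<^bsub>A\<^esub> \<phi> x" if "x \<in> P" for x
    using group_hom.hom_inv[OF gh, of x] that m_inv_consistent[OF Psub that] by simp
  have phiA: "\<phi> x \<in> carrier A" if "x \<in> P" for x using imageI[of x P \<phi>] psurj that by simp
  have phi1: "\<phi> \<one>\<^bsub>G\<^esub> = \<one>\<^bsub>A\<^esub>" using group_hom.hom_one[OF gh] by simp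
  \<comment> \<open>compactness: finitely many vertices suffice\<close>
  have PC0: "P \<subseteq> stabilizer G act \<alpha>" using PH by blast
  have stop: "\<forall>v\<in>V. openin T (stabilizer G act v)" using stab by blast
  have cpt: "compactin T (stabilizer G act \<alpha>)" using stab assms(5) by blast
  obtain F where F: "finite F" "F \<subseteq> V" "\<forall>p\<in>P. (\<forall>v\<in>F. act p v = v) \<longrightarrow> p \<in> Q"
    using finite_fix[OF tg ga stop cpt PC0 Psub Pcl Qcl KQ QP phom psurj pker gA fA] by blast
  obtain Yf where Yf: "adm E \<alpha> u Yf" "F \<subseteq> Yf"
    using adm_cover[OF F(1), of \<alpha> E u] conn F(2) assms(5) by blast
  define Fx where "Fx = (\<lambda>Y. {g \<in> P. \<forall>y\<in>Y. act g y = y})"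
  have good0: "\<phi> ` Fx {\<alpha>, u} = carrier A"
  proof -
    have "Fx {\<alpha>, u} = P" unfolding Fx_def using PH unfolding stabilizer_def by blast
    then show ?thesis using psurj by simp
  qed
  have notgood: "\<phi> ` Fx Yf \<noteq> carrier A"
  proof
    assume eq: "\<phi> ` Fx Yf = carrier A"
    have "Fx Yf \<subseteq> Q" using F(3) Yf(2) unfolding Fx_def by blast
    then have "\<phi> ` Fx Yf \<subseteq> {\<one>\<^bsub>A\<^esub>}" using pker QP unfolding Fx_def by blast
    then have "carrier A = {\<one>\<^bsub>A\<^esub>}" using eq A.one_closed by blast
    then show False using simple_group.simple_not_triv[OF sA] by simp
  qed
  obtain Y0 w where Y0: "adm E \<alpha> u Y0" "w \<in> Y0" "\<phi> ` Fx Y0 = carrier A"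
    "\<phi> ` Fx (Y0 \<union> nbhd E w) \<noteq> carrier A"
    using adm_descent[of "\<lambda>Y. \<phi> ` Fx Y = carrier A" \<alpha> u E Yf, OF good0 Yf(1) notgood] by blast
  have Y0V: "Y0 \<subseteq> V" using adm_sub[OF _ assms(5) uV Y0(1)] edges by blast
  have wV: "w \<in> V" using Y0V Y0(2) by blast
  define Xa where "Xa = Fx Y0"
  define Xb where "Xb = Fx (Y0 \<union> nbhd E w)"
  have nbw: "nbhd E w \<noteq> {}"
  proof
    assume "nbhd E w = {}"
    then show False using Y0(3,4) by simp
  qed
  obtain z0 where z0: "z0 \<in> Y0" "E w z0"
    using adm_nb[OF _ uprop Y0(1)] esym Y0(2) nbw by blast
  have Xsub: "subgroup Xa G" unfolding Xa_def Fx_def by (rule fix_subgroup[OF Psub Y0V])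
  have Xbsub: "subgroup Xb G" unfolding Xb_def Fx_def
    by (rule fix_subgroup[OF Psub]) (use Y0V nbhd_sub in blast)
  have XP: "Xa \<subseteq> P" unfolding Xa_def Fx_def by blast
  have XbX: "Xb \<subseteq> Xa" unfolding Xa_def Xb_def Fx_def by blast
  have XG: "Xa \<subseteq> carrier G" using XP PG by blast
  have conjX': "x \<otimes>\<^bsub>G\<^esub> x' \<otimes>\<^bsub>G\<^esub> inv\<^bsub>G\<^esub> x \<in> Xb" if x: "x \<in> Xa" and x': "x' \<in> Xb" for x x'
  proof -
    have xG: "x \<in> carrier G" and x'G: "x' \<in> carrier G" using x x' XbX XG by blast+
    have ixG: "inv\<^bsub>G\<^esub> x \<in> carrier G" using xG by simp
    have inP: "x \<otimes>\<^bsub>G\<^esub> x' \<otimes>\<^bsub>G\<^esub> inv\<^bsub>G\<^esub> x \<in> P"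
      using x x' XbX XP Psub subgroup.m_closed subgroup.m_inv_closed by (metis subsetD)
    have xw: "act x w = w" using x Y0(2) unfolding Xa_def Fx_def by blast
    have ixw: "act (inv\<^bsub>G\<^esub> x) w = w" using act_inv_l[OF xG wV] xw by simp
    have "act (x \<otimes>\<^bsub>G\<^esub> x' \<otimes>\<^bsub>G\<^esub> inv\<^bsub>G\<^esub> x) y = y" if y: "y \<in> Y0 \<union> nbhd E w" for y
    proof -
      have yV: "y \<in> V" using y Y0V nbhd_sub by blast
      have "act (x \<otimes>\<^bsub>G\<^esub> x' \<otimes>\<^bsub>G\<^esub> inv\<^bsub>G\<^esub> x) y = act x (act x' (act (inv\<^bsub>G\<^esub> x) y))"
        using act_mult[OF m_closed[OF xG x'G] ixG yV] act_mult[OF xG x'G] act_closed[OF ixG yV] by simp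
      moreover have "act (inv\<^bsub>G\<^esub> x) y \<in> Y0 \<union> nbhd E w"
      proof (cases "y \<in> Y0")
        case True
        have "act x y = y" using x True unfolding Xa_def Fx_def by blast
        then have "act (inv\<^bsub>G\<^esub> x) y = y" using act_inv_l[OF xG yV] by simp
        then show ?thesis using True by simp
      next
        case False
        then have "y \<in> nbhd E w" using y by blast
        then have "act (inv\<^bsub>G\<^esub> x) y \<in> nbhd E (act (inv\<^bsub>G\<^esub> x) w)" using nb_pres[OF ixG wV] by blast
        then show ?thesis using ixw by simp
      qed
      moreover have "act x' z = z" if "z \<in> Y0 \<union> nbhd E w" for z
        using x' that unfolding Xb_def Fx_def by blast
      ultimately show ?thesis using act_inv_r[OF xG yV] by simp
    qed
    then show ?thesis using inP unfolding Xb_def Fx_def by blast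
  qed
  have phiX'sub: "subgroup (\<phi> ` Xb) A"
  proof (rule A.subgroupI)
    show "\<phi> ` Xb \<subseteq> carrier A" using phiA XbX XP by blast
    show "\<phi> ` Xb \<noteq> {}" using subgroup.one_closed[OF Xbsub] by blast
    show "inv\<^bsub>A\<^esub> a \<in> \<phi> ` Xb" if aa: "a \<in> \<phi> ` Xb" for a
    proof -
      obtain x where x: "x \<in> Xb" "a = \<phi> x" using aa by blast
      have "inv\<^bsub>G\<^esub> x \<in> Xb" using subgroup.m_inv_closed[OF Xbsub x(1)] .
      moreover have "\<phi> (inv\<^bsub>G\<^esub> x) = inv\<^bsub>A\<^esub> a" using phi_inv x XbX XP by blast
      ultimately show ?thesis by (metis imageI)
    qed
    show "a \<otimes>\<^bsub>A\<^esub> b \<in> \<phi> ` Xb" if ab: "a \<in> \<phi> ` Xb" "b \<in> \<phi> ` Xb" for a b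
    proof -
      obtain x y where x: "x \<in> Xb" "a = \<phi> x" and y: "y \<in> Xb" "b = \<phi> y" using ab by blast
      have "x \<otimes>\<^bsub>G\<^esub> y \<in> Xb" using subgroup.m_closed[OF Xbsub x(1) y(1)] .
      moreover have "\<phi> (x \<otimes>\<^bsub>G\<^esub> y) = a \<otimes>\<^bsub>A\<^esub> b" using phi_mult x y XbX XP by blast
      ultimately show ?thesis by (metis imageI)
    qed
  qed
  have phiX'norm: "\<phi> ` Xb \<lhd> A"
    unfolding A.normal_inv_iff
  proof (intro conjI ballI)
    show "subgroup (\<phi> ` Xb) A" by (rule phiX'sub)
    fix a h assume a: "a \<in> carrier A" and h: "h \<in> \<phi> ` Xb"
    obtain x where x: "x \<in> Xa" "a = \<phi> x" using a Y0(3) unfolding Xa_def by blast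
    obtain x' where x': "x' \<in> Xb" "h = \<phi> x'" using h by blast
    have xP: "x \<in> P" and x'P: "x' \<in> P" using x x' XbX XP by blast+
    have ixP: "inv\<^bsub>G\<^esub> x \<in> P" using subgroup.m_inv_closed[OF Psub xP] .
    have "\<phi> (x \<otimes>\<^bsub>G\<^esub> x' \<otimes>\<^bsub>G\<^esub> inv\<^bsub>G\<^esub> x) = a \<otimes>\<^bsub>A\<^esub> h \<otimes>\<^bsub>A\<^esub> inv\<^bsub>A\<^esub> a"
      using phi_mult[OF subgroup.m_closed[OF Psub xP x'P] ixP] phi_mult[OF xP x'P] phi_inv[OF xP] x x'
      by simp
    then show "a \<otimes>\<^bsub>A\<^esub> h \<otimes>\<^bsub>A\<^esub> inv\<^bsub>A\<^esub> a \<in> \<phi> ` Xb" using conjX'[OF x(1) x'(1)] by (metis imageI)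
  qed
  have phiX'1: "\<phi> ` Xb = {\<one>\<^bsub>A\<^esub>}"
    using simple_group.no_real_normal_subgroup[OF sA phiX'norm] Y0(4) unfolding Xb_def by blast
  \<comment> \<open>conjugation to the base vertex\<close>
  obtain g0 where g0: "g0 \<in> carrier G" "act g0 w = \<alpha>" using trans wV assms(5) by blast
  have ig0: "inv\<^bsub>G\<^esub> g0 \<in> carrier G" using g0 by simp
  have ig0a: "act (inv\<^bsub>G\<^esub> g0) \<alpha> = w" using act_inv_l[OF g0(1) wV] g0(2) by simp
  define c where "c = (\<lambda>x. g0 \<otimes>\<^bsub>G\<^esub> x \<otimes>\<^bsub>G\<^esub> inv\<^bsub>G\<^esub> g0)"
  have cG: "c x \<in> carrier G" if "x \<in> carrier G" for x unfolding c_def using that g0 by simp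
  have cact: "act (c x) v = act g0 (act x (act (inv\<^bsub>G\<^esub> g0) v))" if "x \<in> carrier G" "v \<in> V" for x v
    unfolding c_def using act_conj[OF g0(1) that] .
  have cstab: "c x \<in> stabilizer G act \<alpha>" if x: "x \<in> Xa" for x
  proof -
    have xG: "x \<in> carrier G" using x XG by blast
    have "act x w = w" using x Y0(2) unfolding Xa_def Fx_def by blast
    then have "act (c x) \<alpha> = \<alpha>" using cact[OF xG assms(5)] ig0a g0(2) by simp
    then show ?thesis unfolding stabilizer_def using cG[OF xG] by simp
  qed
  define \<rho> where "\<rho> = (\<lambda>x. Lam (c x))"
  have rho_perm: "\<rho> x permutes {1..d}" if "x \<in> Xa" for x
    unfolding \<rho>_def using Lam_perm[OF cstab[OF that]] .
  have rho_mult: "\<rho> (x \<otimes>\<^bsub>G\<^esub> y) = \<rho> x \<circ> \<rho> y" if "x \<in> Xa" "y \<in> Xa" for x y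
  proof -
    have "c (x \<otimes>\<^bsub>G\<^esub> y) = c x \<otimes>\<^bsub>G\<^esub> c y" unfolding c_def using conj_mult[OF g0(1)] that XG by blast
    then show ?thesis unfolding \<rho>_def using Lam_mult[OF cstab[OF that(1)] cstab[OF that(2)]] by simp
  qed
  have rhohom: "\<rho> \<in> hom (G\<lparr>carrier := Xa\<rparr>) (sym_group d)"
    unfolding hom_def using rho_perm rho_mult by (auto simp: sym_group_carrier sym_group_mult)
  have gX: "group (G\<lparr>carrier := Xa\<rparr>)" by (rule subgroup_imp_group[OF Xsub])
  have phiXhom: "\<phi> \<in> hom (G\<lparr>carrier := Xa\<rparr>) A"
    unfolding hom_def using phiA phi_mult XP by auto
  have phiXsurj: "\<phi> ` carrier (G\<lparr>carrier := Xa\<rparr>) = carrier A" using Y0(3) unfolding Xa_def by simp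
  \<comment> \<open>elements acting trivially near w lie in Xb\<close>
  have rho_ker: "\<phi> x = \<one>\<^bsub>A\<^esub>" if x: "x \<in> Xa" and rid: "\<rho> x = id" for x
  proof -
    have xG: "x \<in> carrier G" using x XG by blast
    have "act x z = z" if z: "z \<in> nbhd E w" for z
    proof -
      have zV: "z \<in> V" using z nbhd_sub by blast
      have gz: "act g0 z \<in> nbhd E \<alpha>" using nb_pres[OF g0(1) wV z] g0(2) by simp
      define i where "i = \<beta> (act g0 z)"
      have i: "i \<in> {1..d}" unfolding i_def using b_in[OF gz] .
      have "\<rho> x i = \<beta> (act (c x) (act g0 z))"
        unfolding \<rho>_def Lam_def using i binv_b[OF gz] unfolding i_def by simp
      then have "\<beta> (act (c x) (act g0 z)) = \<beta> (act g0 z)" using rid unfolding i_def by simp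
      moreover have "act (c x) (act g0 z) \<in> nbhd E \<alpha>" using nb_pres_stab[OF cstab[OF x] gz] .
      ultimately have "act (c x) (act g0 z) = act g0 z" using b_inj gz by blast
      moreover have "act (c x) (act g0 z) = act g0 (act x z)"
        using cact[OF xG act_closed[OF g0(1) zV]] act_inv_l[OF g0(1) zV] by simp
      ultimately have "act g0 (act x z) = act g0 z" by simp
      then show ?thesis using act_inj[OF g0(1) act_closed[OF xG zV] zV] by blast
    qed
    then have "x \<in> Xb" using x unfolding Xa_def Xb_def Fx_def by blast
    then show ?thesis using phiX'1 by blast
  qed
  have ker1: "\<forall>x\<in>carrier (G\<lparr>carrier := Xa\<rparr>). \<rho> x = \<one>\<^bsub>sym_group d\<^esub> \<longrightarrow> \<phi> x = \<one>\<^bsub>A\<^esub>"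
    using rho_ker by (simp add: sym_group_one)
  note D1 = desc[OF gX sym_group_is_group gA rhohom phiXhom phiXsurj ker1]
  have z0n: "z0 \<in> nbhd E w" using z0(2) unfolding nbhd_def by simp
  have z0V: "z0 \<in> V" using z0(1) Y0V by blast
  have gz0: "act g0 z0 \<in> nbhd E \<alpha>" using nb_pres[OF g0(1) wV z0n] g0(2) by simp
  define i0 where "i0 = \<beta> (act g0 z0)"
  have i0: "i0 \<in> {1..d}" unfolding i0_def using b_in[OF gz0] .
  have rho_i0: "\<rho> x i0 = i0" if x: "x \<in> Xa" for x
  proof -
    have xG: "x \<in> carrier G" using x XG by blast
    have "\<rho> x i0 = \<beta> (act (c x) (act g0 z0))"
      unfolding \<rho>_def Lam_def using i0 binv_b[OF gz0] unfolding i0_def by simp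
    also have "act (c x) (act g0 z0) = act g0 (act x z0)"
      using cact[OF xG act_closed[OF g0(1) z0V]] act_inv_l[OF g0(1) z0V] by simp
    also have "act x z0 = z0" using x z0(1) unfolding Xa_def Fx_def by blast
    finally show ?thesis unfolding i0_def .
  qed
  have Hsub: "\<rho> ` Xa \<subseteq> point_stabilizer (local_action G E act \<alpha> \<beta> d) i0"
    unfolding point_stabilizer_def \<rho>_def using Lam_in[OF cstab] rho_i0 unfolding \<rho>_def by blast
  have conj1: "\<exists>i \<in> {1..d}. \<exists>H N. subgroup H (sym_group d) \<and>
            H \<subseteq> point_stabilizer (local_action G E act \<alpha> \<beta> d) i \<and>
            N \<lhd> (sym_group d)\<lparr>carrier := H\<rparr> \<and>
            ((sym_group d)\<lparr>carrier := H\<rparr> Mod N) \<cong> A"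
  proof -
    have "\<exists>H N. subgroup H (sym_group d) \<and>
            H \<subseteq> point_stabilizer (local_action G E act \<alpha> \<beta> d) i0 \<and>
            N \<lhd> (sym_group d)\<lparr>carrier := H\<rparr> \<and>
            ((sym_group d)\<lparr>carrier := H\<rparr> Mod N) \<cong> A"
    proof -
      obtain N where N: "N \<lhd> (sym_group d)\<lparr>carrier := \<rho> ` Xa\<rparr>"
        "((sym_group d)\<lparr>carrier := \<rho> ` Xa\<rparr> Mod N) \<cong> A" using D1 by auto
      have "subgroup (\<rho> ` Xa) (sym_group d)" using D1 by auto
      then show ?thesis using N Hsub by blast
    qed
    then show ?thesis using i0 by blast
  qed
  define \<tau> where "\<tau> = Transposition.transpose i0 d"
  have tt: "\<tau> (\<tau> k) = k" for k unfolding \<tau>_def by simp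
  define \<rho>2 where "\<rho>2 = (\<lambda>x. \<tau> \<circ> \<rho> x \<circ> \<tau>)"
  have rho2_perm: "\<rho>2 x permutes {1..d-1}" if "x \<in> Xa" for x
    unfolding \<rho>2_def \<tau>_def using conj_perm[OF i0 rho_perm[OF that] rho_i0[OF that]] .
  have rho2_mult: "\<rho>2 (x \<otimes>\<^bsub>G\<^esub> y) = \<rho>2 x \<circ> \<rho>2 y" if "x \<in> Xa" "y \<in> Xa" for x y
    unfolding \<rho>2_def rho_mult[OF that] by (simp add: fun_eq_iff tt)
  have rho2hom: "\<rho>2 \<in> hom (G\<lparr>carrier := Xa\<rparr>) (sym_group (d - 1))"
    unfolding hom_def using rho2_perm rho2_mult by (auto simp: sym_group_carrier sym_group_mult)
  have ker2: "\<forall>x\<in>carrier (G\<lparr>carrier := Xa\<rparr>). \<rho>2 x = \<one>\<^bsub>sym_group (d - 1)\<^esub> \<longrightarrow> \<phi> x = \<one>\<^bsub>A\<^esub>"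
  proof (intro ballI impI)
    fix x assume x: "x \<in> carrier (G\<lparr>carrier := Xa\<rparr>)" and r: "\<rho>2 x = \<one>\<^bsub>sym_group (d - 1)\<^esub>"
    have "\<tau> (\<rho> x (\<tau> k)) = k" for k using r unfolding \<rho>2_def sym_group_one by (metis comp_apply id_apply)
    then have "\<rho> x k = k" for k by (metis tt)
    then have "\<rho> x = id" by (simp add: fun_eq_iff)
    then show "\<phi> x = \<one>\<^bsub>A\<^esub>" using rho_ker x by simp
  qed
  note D2 = desc[OF gX sym_group_is_group gA rho2hom phiXhom phiXsurj ker2]
  have conj2: "\<exists>H N. subgroup H (sym_group (d - 1)) \<and>
            N \<lhd> (sym_group (d - 1))\<lparr>carrier := H\<rparr> \<and>
            ((sym_group (d - 1))\<lparr>carrier := H\<rparr> Mod N) \<cong> A"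
    using D2 by blast
  show ?thesis using conj1 conj2 by blast
qed


end
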